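(* For every integer $n\ge1$, $\operatorname{num}_{\mathcal O}(n,-1)=o(n!)$, where $o(M)$ denotes the largest odd divisor of a positive integer $M$.
   Context: An odd partition of $n$ is a partition of $n$ (finite nonincreasing sequence of positive integers summing to $n$) all of whose parts are odd; $\mathcal O(n)$ is the set of odd partitions of $n$, and $m_\lambda(i)$ the number of parts of $\lambda$ equal to $i$. For $\lambda\in\mathcal O(n)$ let $h_{\mathcal O,\lambda}(x)=\prod_{i\ge1,\ i\text{ odd}}(1+x^i)^{\lfloor n/i\rfloor-m_\lambda(i)}$. Let $G_{\mathcal O}(n,x)=\gcd\{h_{\mathcal O,\lambda}(x):\lambda\in\mathcal O(n)\}$ in $\mathbb{Z}[x]$ (normalized with positive leading coefficient), and $\operatorname{num}_{\mathcal O}(n,x)=\frac{1}{G_{\mathcal O}(n,x)}\sum_{\lambda\in\mathcal O(n)}h_{\mathcal O,\lambda}(x)\in\mathbb{Z}[x]$. *)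

theory Defs
  imports "HOL-Computational_Algebra.Computational_Algebra"
begin

definition odd_partitions :: "nat \<Rightarrow> nat list set" where
  "odd_partitions n = {lam. sorted_wrt (\<ge>) lam \<and> (\<forall>p\<in>set lam. 0 < p \<and> odd p)
                           \<and> sum_list lam = n}"

definition mult_part :: "nat list \<Rightarrow> nat \<Rightarrow> nat" where
  "mult_part lam i = count_list lam i"

text \<open>h_{O,lambda}(x) = prod over odd i >= 1 of (1+x^i)^(floor(n/i) - m_lambda(i)).
  For i > n the exponent is 0, so the product is taken over odd i in {1..n}.\<close>
definition h_O :: "nat \<Rightarrow> nat list \<Rightarrow> int poly" where
  "h_O n lam = (\<Prod>i\<in>{i\<in>{1..n}. odd i}. (1 + monom 1 i) ^ (n div i - mult_part lam i))"

text \<open>G_O(n,x): gcd in Z[x], normalized (positive leading coefficient).\<close>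
definition G_O :: "nat \<Rightarrow> int poly" where
  "G_O n = Gcd (h_O n ` odd_partitions n)"

definition num_O :: "nat \<Rightarrow> int poly" where
  "num_O n = (\<Sum>lam\<in>odd_partitions n. h_O n lam) div G_O n"

definition largest_odd_divisor :: "nat \<Rightarrow> nat" where
  "largest_odd_divisor M = (GREATEST d. d dvd M \<and> odd d)"

end

theory Submission
  imports Defs
begin



abbreviation cp :: "int poly \<Rightarrow> complex poly" where
  "cp \<equiv> map_poly of_int"

lemma cp_add: "cp (p + q) = cp p + cp q"
  by (rule poly_eqI) (simp add: coeff_map_poly)
lemma cp_mult: "cp (p * q) = cp p * cp q"
  by (rule poly_eqI) (simp add: coeff_map_poly coeff_mult)
lemma cp_1: "cp 1 = 1" by simp
lemma cp_monom: "cp (monom c n) = monom (of_int c) n" by (simp add: map_poly_monom)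
lemma cp_power: "cp (p ^ k) = cp p ^ k"
  by (induction k) (simp_all add: cp_mult)
lemma cp_prod: "cp (\<Prod>i\<in>A. f i) = (\<Prod>i\<in>A. cp (f i))"
  by (induction A rule: infinite_finite_induct) (simp_all add: cp_mult)
lemma cp_sum: "cp (\<Sum>i\<in>A. f i) = (\<Sum>i\<in>A. cp (f i))"
  by (induction A rule: infinite_finite_induct) (simp_all add: cp_add)
lemma cp_eq_0: "cp p = 0 \<longleftrightarrow> p = 0"
  by (rule map_poly_eq_0_iff) auto
lemma cp_degree: "degree (cp p) = degree p"
  by (rule degree_map_poly) auto
lemma cp_inj: "cp p = cp q \<longleftrightarrow> p = q"
proof
  assume "cp p = cp q"
  then show "p = q" by (metis coeff_map_poly of_int_0 of_int_eq_iff poly_eqI)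
qed simp
lemma cp_poly: "poly (cp p) (of_int x) = of_int (poly p x)"
  by (induction p) (simp_all add: map_poly_pCons)
lemma cp_dvd: "p dvd q \<Longrightarrow> cp p dvd cp q"
  by (auto simp: cp_mult elim!: dvdE)

lemma order_dvd_le:
  fixes p q :: "'a::idom poly"
  assumes "p dvd q" "q \<noteq> 0" shows "order a p \<le> order a q"
proof -
  obtain r where "q = p * r" using assms by (auto elim: dvdE)
  then show ?thesis using assms order_mult[of p r a] by simp
qed

lemma ord_dvd:
  fixes p q :: "complex poly"
  assumes "p \<noteq> 0" "q \<noteq> 0" "\<And>a. order a p \<le> order a q"
  shows "p dvd q"
  using assms
proof (induction "degree p" arbitrary: p q rule: less_induct)
  case less
  show ?case
  proof (cases "degree p = 0")
    case True
    then obtain c where "p = [:c:]" by (metis degree_eq_zeroE)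
    with less.prems have "c \<noteq> 0" by auto
    with \<open>p = [:c:]\<close> show ?thesis by (auto simp: const_poly_dvd_iff dvd_field_iff)
  next
    case False
    then have "\<not> constant (poly p)" by (simp add: constant_degree)
    then obtain a where "poly p a = 0" using fundamental_theorem_of_algebra by blast
    then obtain p' where p': "p = [:-a,1:] * p'" by (meson dvdE poly_eq_0_iff_dvd)
    have "order a p \<noteq> 0" using \<open>poly p a = 0\<close> less.prems order_root by blast
    then have "order a q \<noteq> 0" using less.prems(3)[of a] by linarith
    then have "poly q a = 0" using order_root by blast
    then obtain q' where q': "q = [:-a,1:] * q'" by (meson dvdE poly_eq_0_iff_dvd)
    have p'0: "p' \<noteq> 0" "q' \<noteq> 0" using p' q' less.prems by auto
    have "degree p = degree [:-a,1:] + degree p'" unfolding p'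
      by (rule degree_mult_eq) (use p'0 in auto)
    then have dl: "degree p' < degree p" by simp
    have "order b p' \<le> order b q'" for b
      using less.prems(3)[of b] p' q' less.prems order_mult[of "[:-a,1:]" p' b] order_mult[of "[:-a,1:]" q' b]
      by simp
    then have "p' dvd q'" using less.hyps[OF dl p'0] by blast
    then show ?thesis unfolding p' q' by (rule mult_dvd_mono[OF dvd_refl])
  qed
qed

lemma lift_dvd:
  fixes D h :: "int poly"
  assumes "lead_coeff D = 1" "cp D dvd cp h"
  shows "D dvd h"
proof -
  have D0: "D \<noteq> 0" using assms by auto
  obtain q r where qr: "pseudo_divmod h D = (q, r)" by (cases "pseudo_divmod h D")
  have e: "h = D * q + r" using pseudo_divmod(1)[OF D0 qr] assms by simp
  have r: "r = 0 \<or> degree r < degree D" using pseudo_divmod(2)[OF D0 qr] .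
  have "cp h = cp D * cp q + cp r" using e by (simp add: cp_add cp_mult)
  then have "cp D dvd cp r" using assms(2) by (metis dvd_add_right_iff dvd_triv_left)
  have "r = 0"
  proof (rule ccontr)
    assume "r \<noteq> 0"
    then have "degree D \<le> degree r"
      using dvd_imp_degree_le[OF \<open>cp D dvd cp r\<close>] by (simp add: cp_eq_0 cp_degree)
    with r \<open>r \<noteq> 0\<close> show False by simp
  qed
  then show ?thesis using e by simp
qed

lemma order_binom:
  fixes a :: complex
  assumes "i \<ge> 1"
  shows "order a (1 + monom 1 i) = (if a ^ i = -1 then 1 else 0)"
proof (cases "a ^ i = -1")
  case True
  have p0: "(1 + monom 1 i :: complex poly) \<noteq> 0"
  proof
    assume "(1 + monom 1 i :: complex poly) = 0"
    then have "coeff (1 + monom 1 i :: complex poly) i = 0" by simp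
    then show False using assms by (simp add: coeff_monom)
  qed
  have r: "poly (1 + monom 1 i) a = 0" using True by (simp add: poly_monom)
  have "a \<noteq> 0" using True assms by (auto simp: power_0_left)
  have "pderiv (1 + monom 1 i :: complex poly) = monom (of_nat i) (i - 1)"
    by (simp add: pderiv_add pderiv_monom)
  moreover have "poly (monom (of_nat i :: complex) (i - 1)) a \<noteq> 0"
    using \<open>a \<noteq> 0\<close> assms by (simp add: poly_monom)
  ultimately have "order a (pderiv (1 + monom 1 i :: complex poly)) = 0"
    by (simp add: order_0I)
  then show ?thesis using order_pderiv[OF p0 r] True by simp
next
  case False
  then have "poly (1 + monom 1 i) a \<noteq> 0"
    by (simp add: poly_monom) (metis add_eq_0_iff)
  then show ?thesis using False by (simp add: order_0I)
qed




lemma count_le: "(i::nat) * count_list xs i \<le> sum_list xs"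
  by (induction xs) auto

lemma sum_count:
  assumes "finite A" "set xs \<subseteq> A"
  shows "(\<Sum>i\<in>A. f i * count_list xs i) = sum_list (map f xs)"
  using assms(2)
proof (induction xs)
  case Nil then show ?case by simp
next
  case (Cons x xs)
  have "(\<Sum>i\<in>A. f i * count_list (x # xs) i) = (\<Sum>i\<in>A. f i * count_list xs i + (if x = i then f i else 0))"
    by (rule sum.cong) auto
  also have "\<dots> = (\<Sum>i\<in>A. f i * count_list xs i) + f x"
    using Cons.prems assms(1) by (simp add: sum.distrib)
  finally show ?case using Cons by simp
qed

lemma len_le_sum: "(\<forall>x\<in>set xs. 0 < (x::nat)) \<Longrightarrow> length xs \<le> sum_list xs"
  by (induction xs) auto

lemma len_lt_sum: "(\<forall>x\<in>set xs. 0 < (x::nat)) \<Longrightarrow> xs \<noteq> replicate (length xs) 1 \<Longrightarrow> length xs < sum_list xs"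
proof (induction xs)
  case Nil then show ?case by simp
next
  case (Cons x xs)
  show ?case
  proof (cases "x = 1")
    case True
    then have "xs \<noteq> replicate (length xs) 1" using Cons.prems by auto
    then show ?thesis using Cons True by auto
  next
    case False
    then show ?thesis using Cons.prems len_le_sum[of xs] by auto
  qed
qed

lemma OP_finite: "finite (odd_partitions n)"
proof -
  have "odd_partitions n \<subseteq> {xs. set xs \<subseteq> {1..n} \<and> length xs \<le> n}"
  proof
    fix xs assume "xs \<in> odd_partitions n"
    then have h: "\<forall>p\<in>set xs. 0 < p" "sum_list xs = n" by (auto simp: odd_partitions_def)
    have "set xs \<subseteq> {1..n}"
      using h member_le_sum_list[of _ xs] by fastforce
    moreover have "length xs \<le> n" using len_le_sum[of xs] h by auto
    ultimately show "xs \<in> {xs. set xs \<subseteq> {1..n} \<and> length xs \<le> n}" by simp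
  qed
  then show ?thesis by (rule finite_subset) (rule finite_lists_length_le, simp)
qed

lemma OP_set: "lam \<in> odd_partitions n \<Longrightarrow> set lam \<subseteq> {i\<in>{1..n}. odd i}"
  unfolding odd_partitions_def using member_le_sum_list[of _ lam] by fastforce

lemma OP_ones: "replicate n 1 \<in> odd_partitions n"
  by (auto simp: odd_partitions_def sorted_wrt_iff_nth_less sum_list_replicate)

lemma sorted_wrt_rep: "R x x \<Longrightarrow> sorted_wrt R (replicate k x)"
  by (induction k) auto

lemma OP_d: assumes "odd d" shows "replicate (n div d) d @ replicate (n mod d) 1 \<in> odd_partitions n"
proof -
  have "d \<ge> 1" using assms by (cases d) auto
  then show ?thesis using assms
    by (auto simp: odd_partitions_def sorted_wrt_append sum_list_replicate sorted_wrt_rep)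
qed

lemma decomp2: "(m::nat) > 0 \<Longrightarrow> \<exists>k t. odd t \<and> m = 2^k * t"
proof (induction m rule: less_induct)
  case (less m)
  show ?case
  proof (cases "even m")
    case True
    then obtain m' where "m = 2 * m'" by blast
    with less.prems have "m' < m" "m' > 0" by auto
    then obtain k t where "odd t" "m' = 2^k * t" using less.IH by blast
    then show ?thesis using \<open>m = 2 * m'\<close> by (intro exI[of _ "Suc k"] exI[of _ t]) auto
  next
    case False
    then show ?thesis by (intro exI[of _ 0] exI[of _ m]) auto
  qed
qed

lemma lod_eq:
  assumes "odd t" shows "largest_odd_divisor (2^k * t) = t"
  unfolding largest_odd_divisor_def
proof (rule Greatest_equality)
  show "t dvd 2 ^ k * t \<and> odd t" using assms by simp
next
  fix y assume y: "y dvd 2 ^ k * t \<and> odd y"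
  then have "coprime y (2^k)" by simp
  then have "y dvd t" using y by (metis coprime_dvd_mult_right_iff)
  moreover have "t > 0" using assms by (cases t) auto
  ultimately show "y \<le> t" by (simp add: dvd_imp_le)
qed

lemma lod_props:
  assumes "(m::nat) > 0"
  shows "odd (largest_odd_divisor m)" "largest_odd_divisor m \<ge> 1" "largest_odd_divisor m \<le> m"
    "\<And>d. odd d \<Longrightarrow> d dvd largest_odd_divisor m \<longleftrightarrow> d dvd m"
proof -
  obtain k t where kt: "odd t" "m = 2^k * t" using decomp2[OF assms] by blast
  have l: "largest_odd_divisor m = t" using kt lod_eq by simp
  show "odd (largest_odd_divisor m)" using l kt by simp
  show "largest_odd_divisor m \<ge> 1" using l kt by (cases t) auto
  show "largest_odd_divisor m \<le> m" using l kt assms by simp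
  fix d :: nat assume "odd d"
  then have "coprime d (2^k)" by simp
  then show "d dvd largest_odd_divisor m \<longleftrightarrow> d dvd m" using l kt
    by (simp add: coprime_dvd_mult_right_iff)
qed

lemma lod_mult:
  assumes "(a::nat) > 0" "b > 0"
  shows "largest_odd_divisor (a * b) = largest_odd_divisor a * largest_odd_divisor b"
proof -
  obtain k t where kt: "odd t" "a = 2^k * t" using decomp2[OF assms(1)] by blast
  obtain k' t' where kt': "odd t'" "b = 2^k' * t'" using decomp2[OF assms(2)] by blast
  have "a * b = 2^(k+k') * (t * t')" using kt kt' by (simp add: power_add ac_simps)
  moreover have "largest_odd_divisor (2^(k+k') * (t * t')) = t * t'" using kt kt' by (intro lod_eq) simp
  ultimately have "largest_odd_divisor (a * b) = t * t'" by simp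
  moreover have "largest_odd_divisor a = t" "largest_odd_divisor b = t'" using kt kt' lod_eq by auto
  ultimately show ?thesis by simp
qed

lemma lod_fact: "largest_odd_divisor (fact n) = (\<Prod>m\<in>{1..n}. largest_odd_divisor m)"
proof (induction n)
  case 0
  have "largest_odd_divisor (2^0 * 1) = 1" by (rule lod_eq) simp
  then show ?case by simp
next
  case (Suc n)
  have "largest_odd_divisor (fact (Suc n)) = largest_odd_divisor (Suc n * fact n)" by simp
  also have "\<dots> = largest_odd_divisor (Suc n) * largest_odd_divisor (fact n)"
    by (rule lod_mult) (auto simp: fact_gt_zero)
  finally show ?case using Suc by (simp add: prod.cl_ivl_Suc)
qed

lemma root_struct:
  fixes a :: complex
  assumes d: "odd d" "a ^ d = -1" and mn: "\<And>j. odd j \<Longrightarrow> j < d \<Longrightarrow> a ^ j \<noteq> -1"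
    and i: "odd i"
  shows "a ^ i = -1 \<longleftrightarrow> d dvd i"
proof
  assume "d dvd i"
  then obtain k where "i = d * k" by blast
  with i have "odd k" by simp
  then show "a ^ i = -1" using \<open>i = d * k\<close> d by (simp add: power_mult)
next
  assume ai: "a ^ i = -1"
  define q where "q = i div d"
  define r where "r = i mod d"
  have "i = q * d + r" unfolding q_def r_def by simp
  have dpos: "d > 0" using d by (cases d) auto
  have "r < d" unfolding r_def using dpos by simp
  have "a ^ i = (a ^ d) ^ q * a ^ r" using \<open>i = q * d + r\<close> by (simp add: power_add power_mult mult.commute)
  then have e: "-1 = (-1) ^ q * a ^ r" using ai d by simp
  show "d dvd i"
  proof (cases "even q")
    case True
    then have "a ^ r = -1" using e by simp
    moreover have "odd r" using True \<open>i = q * d + r\<close> i by auto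
    ultimately show ?thesis using mn \<open>r < d\<close> by blast
  next
    case False
    then have ar: "a ^ r = 1" using e by simp
    have "even r" using False \<open>i = q * d + r\<close> i d by auto
    show ?thesis
    proof (cases "r = 0")
      case True then show ?thesis unfolding r_def by auto
    next
      case False
      have "a ^ d = a ^ (d - r) * a ^ r" using \<open>r < d\<close> by (simp flip: power_add)
      then have "a ^ (d - r) = -1" using ar d by simp
      moreover have "odd (d - r)" using \<open>even r\<close> d \<open>r < d\<close> by auto
      moreover have "d - r < d" using False \<open>r < d\<close> by simp
      ultimately show ?thesis using mn by blast
    qed
  qed
qed




lemma order_prod:
  fixes f :: "'b \<Rightarrow> 'a::idom poly"
  assumes "\<And>i. i \<in> A \<Longrightarrow> f i \<noteq> 0"
  shows "order a (\<Prod>i\<in>A. f i) = (\<Sum>i\<in>A. order a (f i))"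
  using assms
proof (induction A rule: infinite_finite_induct)
  case (insert x F)
  have "(\<Prod>i\<in>F. f i) \<noteq> 0" using insert by auto
  then have "f x * (\<Prod>i\<in>F. f i) \<noteq> 0" using insert by auto
  then show ?case using insert by (simp add: order_mult)
qed auto

lemma order_pow:
  fixes p :: "'a::idom poly"
  assumes "p \<noteq> 0" shows "order a (p ^ k) = k * order a p"
  using assms by (induction k) (simp_all add: order_mult)

lemma binom_nz: "(1 + monom 1 i :: 'a::idom poly) \<noteq> 0" if "i \<ge> 1"
proof
  assume "(1 + monom 1 i :: 'a poly) = 0"
  then have "coeff (1 + monom 1 i :: 'a poly) i = 0" by simp
  then show False using that by (simp add: coeff_monom)
qed

lemma binom_lc: "lead_coeff (1 + monom 1 i :: 'a::idom poly) = 1" if "i \<ge> 1"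
proof -
  have "lead_coeff (1 + monom 1 i :: 'a poly) = lead_coeff (monom 1 i :: 'a poly)"
    by (rule lead_coeff_add_le) (use that in \<open>simp add: degree_monom_eq\<close>)
  then show ?thesis by (simp add: degree_monom_eq)
qed

definition Sa :: "complex \<Rightarrow> nat \<Rightarrow> nat set" where
  "Sa a n = {i\<in>{1..n}. odd i \<and> a ^ i = -1}"

lemma h_lc: "lead_coeff (h_O n lam) = 1"
  unfolding h_O_def lead_coeff_prod
proof (rule prod.neutral, rule ballI)
  fix x assume "x \<in> {i\<in>{1..n}. odd i}"
  then have "x \<ge> 1" by simp
  show "lead_coeff ((1 + monom 1 x :: int poly) ^ (n div x - mult_part lam x)) = 1"
    unfolding lead_coeff_power binom_lc[OF \<open>x \<ge> 1\<close>] by simp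
qed

lemma h_nz: "h_O n lam \<noteq> 0"
  using h_lc[of n lam] by auto

lemma cp_h: "cp (h_O n lam) = (\<Prod>i\<in>{i\<in>{1..n}. odd i}. (1 + monom 1 i) ^ (n div i - mult_part lam i))"
  unfolding h_O_def by (simp add: cp_prod cp_power cp_add cp_monom)

lemma order_h:
  "order a (cp (h_O n lam)) = (\<Sum>i\<in>Sa a n. n div i - count_list lam i)"
proof -
  have "order a (cp (h_O n lam)) = (\<Sum>i\<in>{i\<in>{1..n}. odd i}. (n div i - mult_part lam i) * (if a ^ i = -1 then 1 else 0))"
    unfolding cp_h
    by (subst order_prod) (auto simp: binom_nz order_pow order_binom)
  also have "\<dots> = (\<Sum>i\<in>{i\<in>{1..n}. odd i}. if a ^ i = -1 then n div i - count_list lam i else 0)"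
    by (rule sum.cong) (auto simp: mult_part_def)
  also have "\<dots> = (\<Sum>i\<in>Sa a n. n div i - count_list lam i)"
    unfolding Sa_def by (subst sum.inter_filter[symmetric]) (auto intro!: sum.cong)
  finally show ?thesis .
qed

definition P :: "nat \<Rightarrow> int poly" where
  "P j = (\<Sum>k<j. [:0,-1:] ^ k)"

lemma P_mult: "odd j \<Longrightarrow> [:1,1:] * P j = 1 + monom 1 j"
proof -
  assume j: "odd j"
  have "poly ([:1,1:] * P j) x = poly (1 + monom 1 j) x" for x
  proof -
    have ind: "(1 + x) * (\<Sum>k<m. (-x) ^ k) = 1 - (-x) ^ m" for m :: nat
      by (induction m) (simp_all add: algebra_simps)
    have "poly ([:1,1:] * P j) x = poly [:1,1:] x * (\<Sum>k<j. poly [:0,-1:] x ^ k)"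
      by (simp only: P_def poly_mult poly_sum poly_power)
    also have "\<dots> = (1 + x) * (\<Sum>k<j. (-x) ^ k)" by simp
    also have "\<dots> = 1 + x ^ j" using ind[of j] j by (simp add: power_minus_odd)
    finally show ?thesis by (simp add: poly_monom)
  qed
  then have "poly ([:1,1:] * P j) = poly (1 + monom 1 j)" by (rule ext)
  then show ?thesis by (simp only: poly_eq_poly_eq_iff)
qed

lemma P_m1: "poly (P j) (-1) = int j"
  by (simp add: P_def poly_sum)

lemma lin_eq: "[:1,1:] = (1 + monom 1 1 :: 'a::comm_ring_1 poly)"
  by (simp add: monom_altdef one_pCons)

lemma P_lc: "odd j \<Longrightarrow> lead_coeff (P j) = 1"
proof -
  assume j: "odd j"
  then have "j \<ge> 1" by (cases j) auto
  have "lead_coeff ([:1,1:] * P j) = 1" using P_mult[OF j] binom_lc[OF \<open>j \<ge> 1\<close>] by simp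
  moreover have "lead_coeff ([:1,1:] * P j) = lead_coeff [:1,1::int:] * lead_coeff (P j)"
    by (rule lead_coeff_mult)
  moreover have "lead_coeff [:1,1::int:] = 1" by simp
  ultimately show ?thesis by simp
qed

lemma order_P:
  assumes "odd j"
  shows "order a (cp (P j)) = (if a ^ j = -1 then 1 else 0) - (if a = -1 then 1 else 0)"
proof -
  have j: "j \<ge> 1" using assms by (cases j) auto
  have Pnz: "P j \<noteq> 0" using P_lc[OF assms] by auto
  have "cp ([:1,1:] * P j) = cp (1 + monom 1 j)" using P_mult[OF assms] by simp
  then have e: "(1 + monom 1 1) * cp (P j) = 1 + monom 1 j"
    by (simp add: cp_mult cp_add cp_monom lin_eq)
  have "cp (P j) \<noteq> 0" using Pnz cp_eq_0 by blast
  then have "order a ((1 + monom 1 1) * cp (P j)) = order a (1 + monom (1::complex) 1) + order a (cp (P j))"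
    by (intro order_mult) (simp add: binom_nz)
  then have "order a (1 + monom (1::complex) j) = order a (1 + monom (1::complex) 1) + order a (cp (P j))"
    using e by simp
  then show ?thesis using order_binom[OF j, of a] order_binom[of 1 a] by (auto split: if_splits)
qed

definition Q :: "nat \<Rightarrow> int poly" where
  "Q n = (\<Prod>m\<in>{1..n}. P (largest_odd_divisor m))"

lemma Q_lc: "lead_coeff (Q n) = 1"
  unfolding Q_def by (simp add: lead_coeff_prod P_lc lod_props)

lemma Q_m1: "poly (Q n) (-1) = int (largest_odd_divisor (fact n))"
  unfolding Q_def lod_fact by (simp add: poly_prod P_m1)

lemma order_Q:
  "order a (cp (Q n)) = (\<Sum>m\<in>{1..n}. (if a ^ largest_odd_divisor m = -1 then 1 else 0) - (if a = -1 then 1 else 0))"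
proof -
  have "order a (cp (Q n)) = (\<Sum>m\<in>{1..n}. order a (cp (P (largest_odd_divisor m))))"
    unfolding Q_def cp_prod
    by (rule order_prod) (metis P_lc atLeastAtMost_iff cp_eq_0 leading_coeff_0_iff lod_props(1) zero_neq_one less_le_trans zero_less_one)
  also have "\<dots> = (\<Sum>m\<in>{1..n}. (if a ^ largest_odd_divisor m = -1 then 1 else 0) - (if a = -1 then 1 else 0))"
    by (rule sum.cong) (auto simp: order_P lod_props)
  finally show ?thesis .
qed




definition K :: "nat \<Rightarrow> complex \<Rightarrow> nat" where
  "K n a = (\<Sum>i\<in>Sa a n. n div i)"
definition M :: "nat \<Rightarrow> complex \<Rightarrow> nat list \<Rightarrow> nat" where
  "M n a lam = (\<Sum>i\<in>Sa a n. count_list lam i)"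
definition OQ :: "nat \<Rightarrow> complex \<Rightarrow> nat" where
  "OQ n a = (\<Sum>m\<in>{1..n}. (if a ^ largest_odd_divisor m = -1 then 1 else 0) - (if a = -1 then 1 else 0))"

lemma count_rep: "count_list (replicate k x) y = (if x = y then k else 0)"
  by (induction k) auto

lemma Sa_fin: "finite (Sa a n)" unfolding Sa_def by simp

lemma count_div: "lam \<in> odd_partitions n \<Longrightarrow> i \<ge> 1 \<Longrightarrow> count_list lam i \<le> n div i"
proof -
  assume "lam \<in> odd_partitions n" "i \<ge> 1"
  then have "i * count_list lam i \<le> n" using count_le[of i lam] by (simp add: odd_partitions_def)
  then have "(i * count_list lam i) div i \<le> n div i" by (rule div_le_mono)
  then show ?thesis using \<open>i \<ge> 1\<close> by simp
qed

lemma oh_eq: "lam \<in> odd_partitions n \<Longrightarrow> order a (cp (h_O n lam)) = K n a - M n a lam"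
  unfolding order_h K_def M_def
  by (rule sum_subtractf_nat) (auto simp: Sa_def count_div)

lemma M_le_K: "lam \<in> odd_partitions n \<Longrightarrow> M n a lam \<le> K n a"
  unfolding K_def M_def by (rule sum_mono) (auto simp: Sa_def count_div)

lemma case_m1_Sa: "Sa (-1) n = {i\<in>{1..n}. odd i}"
  unfolding Sa_def by auto

lemma case_m1_M: "lam \<in> odd_partitions n \<Longrightarrow> M n (-1) lam = length lam"
proof -
  assume l: "lam \<in> odd_partitions n"
  have "M n (-1) lam = (\<Sum>i\<in>{i\<in>{1..n}. odd i}. (\<lambda>_. 1) i * count_list lam i)"
    unfolding M_def case_m1_Sa by simp
  also have "\<dots> = sum_list (map (\<lambda>_. 1) lam)"
    by (rule sum_count) (use OP_set[OF l] in auto)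
  finally show ?thesis by (simp add: sum_list_triv)
qed

lemma case_m1_OQ: "OQ n (-1) = 0"
  unfolding OQ_def by (rule sum.neutral) (auto simp: lod_props)

lemma case_m1_K: "n \<ge> 1 \<Longrightarrow> n \<le> K n (-1)"
proof -
  assume "n \<ge> 1"
  then have "1 \<in> Sa (-1) n" unfolding Sa_def by auto
  then have "n div 1 \<le> K n (-1)" unfolding K_def by (rule member_le_sum[OF _ _ Sa_fin, where f="\<lambda>i. n div i"]) auto
  then show ?thesis by simp
qed

lemma ones_M: "a \<noteq> -1 \<Longrightarrow> M n a (replicate n 1) = 0"
  unfolding M_def Sa_def by (rule sum.neutral) (auto simp: count_rep)

lemma OQ_card: "a \<noteq> -1 \<Longrightarrow> OQ n a = card {m\<in>{1..n}. a ^ largest_odd_divisor m = -1}"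
  unfolding OQ_def by (simp add: sum.inter_filter[symmetric])

lemma struct:
  assumes "a \<noteq> -1" "Sa a n \<noteq> {}"
  shows "\<exists>d. odd d \<and> 1 \<le> d \<and> d \<le> n \<and> d \<in> Sa a n \<and> (\<forall>i. odd i \<longrightarrow> a ^ i = -1 \<longleftrightarrow> d dvd i)"
proof -
  define d where "d = Min (Sa a n)"
  have dS: "d \<in> Sa a n" unfolding d_def using assms Sa_fin by (rule_tac Min_in) auto
  then have d: "odd d" "1 \<le> d" "d \<le> n" "a ^ d = -1" unfolding Sa_def by auto
  have mn: "a ^ j \<noteq> -1" if "odd j" "j < d" for j
  proof
    assume "a ^ j = -1"
    then have "j \<in> Sa a n" using that d unfolding Sa_def by (cases j) auto
    then have "d \<le> j" unfolding d_def using Sa_fin by simp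
    then show False using that by simp
  qed
  have "\<forall>i. odd i \<longrightarrow> a ^ i = -1 \<longleftrightarrow> d dvd i"
    using root_struct[OF d(1) d(4) mn] by blast
  then show ?thesis using d dS by blast
qed

lemma card_mult: "d \<ge> 1 \<Longrightarrow> card {m\<in>{1..n}. (d::nat) dvd m} = n div d"
proof -
  assume d: "d \<ge> 1"
  have "{m\<in>{1..n}. d dvd m} = (\<lambda>j. d * j) ` {1..n div d}"
  proof (rule set_eqI)
    fix m
    show "m \<in> {m\<in>{1..n}. d dvd m} \<longleftrightarrow> m \<in> (\<lambda>j. d * j) ` {1..n div d}"
    proof
      assume "m \<in> {m\<in>{1..n}. d dvd m}"
      then have m: "1 \<le> m" "m \<le> n" "d dvd m" by simp_all
      then obtain j where j: "m = d * j" by (elim dvdE)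
      have "j \<ge> 1" using m(1) j by (cases j) simp_all
      moreover have "j \<le> n div d"
      proof -
        have "(d * j) div d \<le> n div d" using j m(2) by (intro div_le_mono) simp
        then show ?thesis using d by simp
      qed
      ultimately show "m \<in> (\<lambda>j. d * j) ` {1..n div d}" using j by (intro image_eqI[of _ _ j]) simp_all
    next
      assume "m \<in> (\<lambda>j. d * j) ` {1..n div d}"
      then obtain j where j: "m = d * j" "1 \<le> j" "j \<le> n div d" by (auto simp only: image_iff atLeastAtMost_iff)
      have "d * j \<le> d * (n div d)" using j by simp
      also have "\<dots> \<le> n" by simp
      finally have "m \<le> n" using j by simp
      moreover have "1 \<le> m" using j d by simp
      ultimately show "m \<in> {m\<in>{1..n}. d dvd m}" using j by simp
    qed
  qed
  moreover have "inj_on (\<lambda>j. d * j) {1..n div d}" using d by (intro inj_onI) simp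
  ultimately show ?thesis by (simp add: card_image)
qed

lemma gen_OQ:
  assumes "a \<noteq> -1" "odd d" "1 \<le> d" "\<forall>i. odd i \<longrightarrow> a ^ i = -1 \<longleftrightarrow> d dvd i"
  shows "OQ n a = n div d"
proof -
  have "{m\<in>{1..n}. a ^ largest_odd_divisor m = -1} = {m\<in>{1..n}. d dvd m}"
  proof (rule Collect_cong)
    fix m
    show "(m \<in> {1..n} \<and> a ^ largest_odd_divisor m = -1) = (m \<in> {1..n} \<and> d dvd m)"
    proof (cases "m \<in> {1..n}")
      case True
      then have m: "m > 0" by simp
      have "a ^ largest_odd_divisor m = -1 \<longleftrightarrow> d dvd largest_odd_divisor m"
        using assms(4) lod_props(1)[OF m] by blast
      also have "\<dots> \<longleftrightarrow> d dvd m" using lod_props(4)[OF m assms(2)] .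
      finally show ?thesis using True by simp
    qed auto
  qed
  then show ?thesis using OQ_card[OF assms(1)] card_mult[OF assms(3)] by simp
qed

lemma gen_M:
  assumes "odd d" "1 \<le> d" "\<forall>i. odd i \<longrightarrow> a ^ i = -1 \<longleftrightarrow> d dvd i" "lam \<in> odd_partitions n"
  shows "M n a lam \<le> n div d"
proof -
  have "d * M n a lam = (\<Sum>i\<in>Sa a n. d * count_list lam i)"
    unfolding M_def by (simp add: sum_distrib_left)
  also have "\<dots> \<le> (\<Sum>i\<in>Sa a n. i * count_list lam i)"
  proof (rule sum_mono)
    fix i assume "i \<in> Sa a n"
    then have i: "odd i" "a ^ i = -1" "i \<ge> 1" unfolding Sa_def by auto
    then have "d dvd i" using assms(3) by blast
    then have "d \<le> i" using i(3) by (intro dvd_imp_le) simp_all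
    then show "d * count_list lam i \<le> i * count_list lam i" by (rule mult_right_mono) simp
  qed
  also have "\<dots> \<le> (\<Sum>i\<in>{i\<in>{1..n}. odd i}. i * count_list lam i)"
    by (rule sum_mono2) (auto simp: Sa_def)
  also have "\<dots> = sum_list (map id lam)"
    using sum_count[of "{i\<in>{1..n}. odd i}" lam id] OP_set[OF assms(4)] by simp
  also have "\<dots> = n" using assms(4) by (simp add: odd_partitions_def)
  finally have "d * M n a lam \<le> n" .
  then have "(d * M n a lam) div d \<le> n div d" by (rule div_le_mono)
  then show ?thesis using assms(2) by simp
qed

lemma gen_Md:
  assumes "a \<noteq> -1" "d \<in> Sa a n"
  shows "M n a (replicate (n div d) d @ replicate (n mod d) 1) = n div d"
proof -
  have "M n a (replicate (n div d) d @ replicate (n mod d) 1) = (\<Sum>i\<in>Sa a n. if i = d then n div d else 0)"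
    unfolding M_def
  proof (rule sum.cong)
    fix i assume "i \<in> Sa a n"
    then have "i \<noteq> 1" using assms(1) unfolding Sa_def by auto
    then show "count_list (replicate (n div d) d @ replicate (n mod d) 1) i = (if i = d then n div d else 0)"
      by (simp add: count_list_append count_rep)
  qed simp
  also have "\<dots> = n div d" using assms(2) Sa_fin by simp
  finally show ?thesis .
qed

lemma gen_K: "d \<in> Sa a n \<Longrightarrow> n div d \<le> K n a"
  unfolding K_def by (rule member_le_sum[OF _ _ Sa_fin, where f="\<lambda>i. n div i"]) auto




lemma lod_in_Sa: "m \<in> {1..n} \<Longrightarrow> a ^ largest_odd_divisor m = -1 \<Longrightarrow> largest_odd_divisor m \<in> Sa a n"
proof -
  assume m: "m \<in> {1..n}" "a ^ largest_odd_divisor m = -1"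
  then have "m > 0" by simp
  have "odd (largest_odd_divisor m)" "largest_odd_divisor m \<ge> 1" "largest_odd_divisor m \<le> m"
    using lod_props(1-3)[OF \<open>m > 0\<close>] by simp_all
  then show ?thesis unfolding Sa_def using m by simp
qed

lemma numeric:
  assumes n: "n \<ge> 1"
  shows "OQ n a \<le> K n a - M n a (replicate n 1)"
    and "\<And>lam. lam \<in> odd_partitions n \<Longrightarrow> K n a - M n a (replicate n 1) - OQ n a \<le> K n a - M n a lam"
    and "\<exists>lam\<in>odd_partitions n. K n a - M n a lam \<le> K n a - M n a (replicate n 1) - OQ n a"
proof -
  have "OQ n a \<le> K n a - M n a (replicate n 1) \<and>
    (\<forall>lam \<in> odd_partitions n. K n a - M n a (replicate n 1) - OQ n a \<le> K n a - M n a lam) \<and>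
    (\<exists>lam\<in>odd_partitions n. K n a - M n a lam \<le> K n a - M n a (replicate n 1) - OQ n a)"
  proof (cases "a = -1")
    case True
    have M1: "M n a (replicate n 1) = n" unfolding True using case_m1_M[OF OP_ones] by simp
    have OQ0: "OQ n a = 0" unfolding True by (rule case_m1_OQ)
    have Ml: "M n a lam \<le> n" if l: "lam \<in> odd_partitions n" for lam
    proof -
      have "\<forall>x\<in>set lam. 0 < x" "sum_list lam = n" using l unfolding odd_partitions_def by blast+
      then have "length lam \<le> n" using len_le_sum[of lam] by simp
      moreover have "M n a lam = length lam" unfolding True by (rule case_m1_M[OF l])
      ultimately show ?thesis by simp
    qed
    have "K n a - M n a (replicate n 1) - OQ n a \<le> K n a - M n a lam" if "lam \<in> odd_partitions n" for lam
      unfolding M1 OQ0 using Ml[OF that] by (simp add: diff_le_mono2)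
    moreover have "K n a - M n a (replicate n 1) \<le> K n a - M n a (replicate n 1) - OQ n a"
      unfolding OQ0 by simp
    moreover have "OQ n a \<le> K n a - M n a (replicate n 1)" unfolding OQ0 by simp
    ultimately show ?thesis using OP_ones by blast
  next
    case False
    have M1: "M n a (replicate n 1) = 0" using False ones_M by simp
    show ?thesis
    proof (cases "Sa a n = {}")
      case True
      have "{m\<in>{1..n}. a ^ largest_odd_divisor m = -1} = {}" using True lod_in_Sa by blast
      then have "OQ n a = 0" using OQ_card[OF False] by simp
      moreover have "K n a = 0" using True by (simp add: K_def)
      ultimately show ?thesis using OP_ones by (intro conjI ballI bexI[of _ "replicate n 1"]) simp_all
    next
      case True2: False
      obtain d where d: "odd d" "1 \<le> d" "d \<le> n" "d \<in> Sa a n" "\<forall>i. odd i \<longrightarrow> a ^ i = -1 \<longleftrightarrow> d dvd i"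
        using struct[OF False True2] by blast
      have OQd: "OQ n a = n div d" using gen_OQ[OF False d(1,2,5)] .
      have Kd: "n div d \<le> K n a" using gen_K[OF d(4)] .
      have Ml: "M n a lam \<le> n div d" if "lam \<in> odd_partitions n" for lam
        using gen_M[OF d(1,2,5) that] .
      have Md: "M n a (replicate (n div d) d @ replicate (n mod d) 1) = n div d"
        using gen_Md[OF False d(4)] .
      have "replicate (n div d) d @ replicate (n mod d) 1 \<in> odd_partitions n" using OP_d[OF d(1)] .
      then show ?thesis using M1 OQd Kd Md
      proof (intro conjI ballI bexI[of _ "replicate (n div d) d @ replicate (n mod d) 1"])
        fix lam assume "lam \<in> odd_partitions n"
        then show "K n a - M n a (replicate n 1) - OQ n a \<le> K n a - M n a lam"
          using M1 OQd Ml by (simp add: diff_le_mono2)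
      qed simp_all
    qed
  qed
  then show "OQ n a \<le> K n a - M n a (replicate n 1)"
    and "\<And>lam. lam \<in> odd_partitions n \<Longrightarrow> K n a - M n a (replicate n 1) - OQ n a \<le> K n a - M n a lam"
    and "\<exists>lam\<in>odd_partitions n. K n a - M n a lam \<le> K n a - M n a (replicate n 1) - OQ n a"
    by blast+
qed

lemma numericD:
  assumes n: "n \<ge> 1" and lam: "lam \<in> odd_partitions n" "lam \<noteq> replicate n 1"
  shows "K n (-1) - M n (-1) (replicate n 1) - OQ n (-1) < K n (-1) - M n (-1) lam"
proof -
  have M1: "M n (-1) (replicate n 1) = n" using case_m1_M[OF OP_ones] by simp
  have pos: "\<forall>x\<in>set lam. 0 < x" and s: "sum_list lam = n" using lam by (auto simp: odd_partitions_def)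
  have "lam \<noteq> replicate (length lam) 1"
  proof
    assume eq: "lam = replicate (length lam) 1"
    then have "sum_list lam = sum_list (replicate (length lam) (1::nat))" by (rule arg_cong)
    then have "sum_list lam = length lam" by (simp add: sum_list_replicate)
    then have "length lam = n" using s by simp
    then have "lam = replicate n 1" using eq by metis
    then show False using lam(2) by contradiction
  qed
  then have "length lam < n" using len_lt_sum[OF pos] s by simp
  moreover have "n \<le> K n (-1)" using case_m1_K[OF n] .
  ultimately show ?thesis using M1 case_m1_OQ case_m1_M[OF lam(1)] by simp
qed

lemma order_Q': "order a (cp (Q n)) = OQ n a"
  unfolding order_Q OQ_def ..

lemma normalize_monic_int: "lead_coeff (p :: int poly) = 1 \<Longrightarrow> normalize p = p"
  by (simp add: normalize_poly_eq_map_poly)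

theorem theorem3:
  fixes n :: nat
  assumes "n \<ge> 1"
  shows "poly (num_O n) (-1) = int (largest_odd_divisor (fact n))"
proof -
  define one where "one = replicate n (1::nat)"
  define OP where "OP = odd_partitions n"
  define G where "G = G_O n"
  have one: "one \<in> OP" unfolding one_def OP_def by (rule OP_ones)
  have ordh: "order a (cp (h_O n lam)) = K n a - M n a lam" if "lam \<in> OP" for a lam
    using oh_eq that unfolding OP_def by blast
  have hnz: "cp (h_O n lam) \<noteq> 0" for lam using h_nz cp_eq_0 by blast
  have Qnz: "cp (Q n) \<noteq> 0" using Q_lc cp_eq_0 by (metis leading_coeff_0_iff zero_neq_one)
  have "Q n dvd h_O n one"
  proof (rule lift_dvd[OF Q_lc], rule ord_dvd[OF Qnz hnz])
    fix a show "order a (cp (Q n)) \<le> order a (cp (h_O n one))"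
      using numeric(1)[OF assms, of a] ordh[OF one] order_Q' unfolding one_def by simp
  qed
  then obtain D where hD: "h_O n one = Q n * D" by (elim dvdE)
  have Dlc: "lead_coeff D = 1"
    using h_lc[of n one] Q_lc[of n] unfolding hD lead_coeff_mult by simp
  have Dnz: "D \<noteq> 0" using Dlc by auto
  have ordD: "order a (cp D) = K n a - M n a one - OQ n a" for a
  proof -
    have "cp (h_O n one) = cp (Q n) * cp D" unfolding hD cp_mult ..
    then have "order a (cp (h_O n one)) = order a (cp (Q n)) + order a (cp D)"
      using hnz[of one] by (simp add: order_mult)
    then show ?thesis using ordh[OF one] order_Q' by simp
  qed
  have cpDnz: "cp D \<noteq> 0" using Dnz cp_eq_0 by blast
  have Ddvd: "D dvd h_O n lam" if "lam \<in> OP" for lam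
  proof (rule lift_dvd[OF Dlc], rule ord_dvd[OF cpDnz hnz])
    fix a show "order a (cp D) \<le> order a (cp (h_O n lam))"
      using numeric(2)[OF assms, of lam a] that ordD[of a] ordh[OF that] unfolding one_def OP_def by simp
  qed
  have DG: "D dvd G" unfolding G_def G_O_def
    by (rule Gcd_greatest) (use Ddvd in \<open>auto simp: OP_def\<close>)
  have Gdvd: "G dvd h_O n lam" if "lam \<in> OP" for lam
    unfolding G_def G_O_def by (rule Gcd_dvd) (use that in \<open>auto simp: OP_def\<close>)
  have Gnz: "G \<noteq> 0" using Gdvd[OF one] h_nz by auto
  have Gnorm: "normalize G = G" unfolding G_def G_O_def by simp
  have Glc: "lead_coeff G = 1"
  proof -
    obtain f where "h_O n one = G * f" using Gdvd[OF one] by (elim dvdE)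
    then have "lead_coeff G * lead_coeff f = 1" using h_lc[of n one] by (simp add: lead_coeff_mult)
    then have "lead_coeff G = 1 \<or> lead_coeff G = -1" by (rule pos_zmult_eq_1_iff_lemma)
    moreover have "lead_coeff G \<noteq> -1"
    proof
      assume m: "lead_coeff G = -1"
      have "coeff (normalize G) (degree G) = lead_coeff G div unit_factor (lead_coeff G)"
        by (simp add: normalize_poly_eq_map_poly coeff_map_poly)
      then have "lead_coeff G = 1" using m Gnorm by simp
      with m show False by simp
    qed
    ultimately show ?thesis by blast
  qed
  have cpGnz: "cp G \<noteq> 0" using Gnz cp_eq_0 by blast
  have GD: "G dvd D"
  proof (rule lift_dvd[OF Glc], rule ord_dvd[OF cpGnz cpDnz])
    fix a
    obtain lam where lam: "lam \<in> OP" "K n a - M n a lam \<le> K n a - M n a one - OQ n a"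
      using numeric(3)[OF assms, of a] unfolding OP_def one_def by blast
    have "order a (cp G) \<le> order a (cp (h_O n lam))"
      by (rule order_dvd_le[OF cp_dvd[OF Gdvd[OF lam(1)]] hnz])
    also have "\<dots> \<le> order a (cp D)" using ordh[OF lam(1)] lam(2) ordD[of a] by simp
    finally show "order a (cp G) \<le> order a (cp D)" .
  qed
  have GeqD: "G = D"
    by (rule associated_eqI[OF GD DG Gnorm normalize_monic_int[OF Dlc]])
  define c where "c lam = h_O n lam div D" for lam
  have hc: "h_O n lam = D * c lam" if "lam \<in> OP" for lam
    unfolding c_def using Ddvd[OF that] by simp
  have "(\<Sum>lam\<in>OP. h_O n lam) = D * (\<Sum>lam\<in>OP. c lam)"
    by (simp add: sum_distrib_left hc)
  then have num: "num_O n = (\<Sum>lam\<in>OP. c lam)"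
    unfolding num_O_def G_O_def[symmetric] G_def[symmetric] OP_def[symmetric] GeqD using Dnz by simp
  have c1: "c one = Q n" using hc[OF one] hD Dnz by (simp add: mult.commute)
  have c0: "poly (c lam) (-1) = 0" if "lam \<in> OP" "lam \<noteq> one" for lam
  proof -
    have cnz: "cp (c lam) \<noteq> 0" using hc[OF that(1)] h_nz[of n lam] cp_eq_0 by auto
    have "cp (h_O n lam) = cp D * cp (c lam)" unfolding hc[OF that(1)] cp_mult ..
    then have "order (-1) (cp (h_O n lam)) = order (-1) (cp D) + order (-1) (cp (c lam))"
      using hnz[of lam] by (simp add: order_mult)
    moreover have "order (-1) (cp D) < order (-1) (cp (h_O n lam))"
      using numericD[OF assms, of lam] that ordD ordh[OF that(1)] unfolding OP_def one_def by simp
    ultimately have "order (-1) (cp (c lam)) \<noteq> 0" by simp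
    then have "poly (cp (c lam)) (-1) = 0" using order_root by blast
    then have "complex_of_int (poly (c lam) (-1)) = 0" using cp_poly[of "c lam" "-1"] by simp
    then show ?thesis by simp
  qed
  have fin: "finite OP" unfolding OP_def by (rule OP_finite)
  have "poly (num_O n) (-1) = (\<Sum>lam\<in>OP. poly (c lam) (-1))"
    unfolding num by (simp add: poly_sum)
  also have "\<dots> = poly (c one) (-1) + (\<Sum>lam\<in>OP - {one}. poly (c lam) (-1))"
    using fin one by (simp add: sum.remove)
  also have "(\<Sum>lam\<in>OP - {one}. poly (c lam) (-1)) = 0"
    by (rule sum.neutral) (use c0 in auto)
  finally show ?thesis using c1 Q_m1 by simp
qed


end
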